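(* Let $\eta>0$, $\beta\in\mathbb{R}$ and $\gamma\ge\eta$. Let $\widehat{\mathcal{L}}_1,\widehat{\mathcal{L}}_2\in\mathbb{R}^{N\times N}$ satisfy $\langle \widehat{\mathcal{L}}_i\mathbf{x},\mathbf{x}\rangle\le 0$ for all $\mathbf{x}\in\mathbb{R}^N$, $i=1,2$. Define $$\mathcal{P}_{\gamma}:=\left[\eta I-\widehat{\mathcal{L}}_2+\beta^2(\eta I-\widehat{\mathcal{L}}_1)^{-1}\right](\gamma I-\widehat{\mathcal{L}}_2)^{-1}.$$ Then $\|\mathcal{P}_\gamma\|\le 1+\dfrac{\beta^2}{\gamma\eta}$.
   Context: $\langle\cdot,\cdot\rangle$ is the Euclidean inner product on $\mathbb{R}^N$ and $\|\cdot\|$ the induced operator two-norm. The matrices $\eta I-\widehat{\mathcal{L}}_1$ and $\gamma I-\widehat{\mathcal{L}}_2$ are invertible under the stated hypotheses. *)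

theory Defs
  imports "HOL-Analysis.Analysis"
begin

end

theory Submission
  imports Defs
begin

lemma mv_scal: fixes x :: "real^'n" shows "(c *\<^sub>R mat 1) *v x = c *\<^sub>R x"
  by (metis scaleR_matrix_vector_assoc matrix_vector_mul_lid)

lemma key:
  fixes L :: "real^'n^'n"
  assumes c: "c > 0" and L: "\<forall>x. (L *v x) \<bullet> x \<le> 0"
  shows "(c *\<^sub>R mat 1 - L) *v (matrix_inv (c *\<^sub>R mat 1 - L) *v y) = y"
    and "(matrix_inv (c *\<^sub>R mat 1 - L) *v y) \<bullet> y \<ge> c * norm (matrix_inv (c *\<^sub>R mat 1 - L) *v y)^2"
    and "norm (matrix_inv (c *\<^sub>R mat 1 - L) *v y) \<le> norm y / c"
proof -
  define M where "M = c *\<^sub>R mat 1 - L"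
  have ge: "(M *v x) \<bullet> x \<ge> c * norm x ^ 2" for x
  proof -
    have "M *v x = c *\<^sub>R x - L *v x" unfolding M_def
      by (simp add: matrix_vector_mult_diff_rdistrib mv_scal)
    hence "(M *v x) \<bullet> x = c * (x \<bullet> x) - (L *v x) \<bullet> x"
      by (simp add: inner_diff_left)
    thus ?thesis using L by (simp add: power2_norm_eq_inner)
  qed
  have "inj ((*v) M)"
  proof (rule linear_injective_0[THEN iffD2])
    show "linear ((*v) M)" by simp
    show "\<forall>x. M *v x = 0 \<longrightarrow> x = 0"
    proof (intro allI impI)
      fix x assume "M *v x = 0"
      with ge[of x] have "c * norm x ^ 2 \<le> 0" by simp
      with c show "x = 0"
        by (metis mult_pos_pos norm_eq_zero not_le zero_less_norm_iff zero_less_power)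
    qed
  qed
  hence "invertible M"
    using matrix_left_invertible_injective invertible_left_inverse by blast
  hence inv: "M ** matrix_inv M = mat 1 \<and> matrix_inv M ** M = mat 1"
    unfolding invertible_def matrix_inv_def by (rule someI_ex)
  define x where "x = matrix_inv M *v y"
  have Mx: "M *v x = y" unfolding x_def
    by (simp add: matrix_vector_mul_assoc inv)
  thus "(c *\<^sub>R mat 1 - L) *v (matrix_inv (c *\<^sub>R mat 1 - L) *v y) = y"
    unfolding M_def x_def .
  have g: "x \<bullet> y \<ge> c * norm x ^ 2" using ge[of x] Mx by (simp add: inner_commute)
  thus "(matrix_inv (c *\<^sub>R mat 1 - L) *v y) \<bullet> y \<ge> c * norm (matrix_inv (c *\<^sub>R mat 1 - L) *v y)^2"
    unfolding M_def x_def .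
  have "c * norm x ^ 2 \<le> norm x * norm y"
    using g Cauchy_Schwarz_ineq2[of x y] by linarith
  hence "c * norm x \<le> norm y"
    by (cases "norm x = 0") (auto simp: power2_eq_square)
  hence "norm x \<le> norm y / c" using c by (simp add: field_simps)
  thus "norm (matrix_inv (c *\<^sub>R mat 1 - L) *v y) \<le> norm y / c"
    unfolding M_def x_def .
qed

theorem mainTheorem2:
  fixes L1 L2 :: "real^'n^'n" and \<eta> \<beta> \<gamma> :: real
  assumes "\<eta> > 0" and "\<gamma> \<ge> \<eta>"
    and "\<forall>x. (L1 *v x) \<bullet> x \<le> 0"
    and "\<forall>x. (L2 *v x) \<bullet> x \<le> 0"
  shows "onorm (\<lambda>x. ((\<eta> *\<^sub>R mat 1 - L2 + \<beta>\<^sup>2 *\<^sub>R matrix_inv (\<eta> *\<^sub>R mat 1 - L1))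
                    ** matrix_inv (\<gamma> *\<^sub>R mat 1 - L2)) *v x)
         \<le> 1 + \<beta>\<^sup>2 / (\<gamma> * \<eta>)"
proof (rule onorm_le)
  fix y :: "real^'n"
  have gp: "\<gamma> > 0" using assms by linarith
  define x where "x = matrix_inv (\<gamma> *\<^sub>R mat 1 - L2) *v y"
  have Bx: "\<gamma> *\<^sub>R x - L2 *v x = y"
    using key(1)[OF gp assms(4), of y] unfolding x_def[symmetric]
    by (simp add: matrix_vector_mult_diff_rdistrib mv_scal)
  have xy: "x \<bullet> y \<ge> \<gamma> * norm x ^ 2" using key(2)[OF gp assms(4), of y] unfolding x_def .
  have nx: "norm x \<le> norm y / \<gamma>" using key(3)[OF gp assms(4), of y] unfolding x_def .
  define d where "d = \<gamma> - \<eta>"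
  have d0: "0 \<le> d" "d \<le> 2 * \<gamma>" using assms unfolding d_def by auto
  have Ax: "(\<eta> *\<^sub>R mat 1 - L2) *v x = y - d *\<^sub>R x"
    using Bx unfolding d_def by (simp add: matrix_vector_mult_diff_rdistrib mv_scal algebra_simps)
  have "norm (y - d *\<^sub>R x) ^ 2 = norm y ^ 2 - 2 * d * (x \<bullet> y) + d^2 * norm x ^ 2"
    proof -
    have "norm (y - d *\<^sub>R x) ^ 2 = (y - d *\<^sub>R x) \<bullet> (y - d *\<^sub>R x)" by (rule power2_norm_eq_inner)
    also have "\<dots> = y \<bullet> y - 2 * d * (x \<bullet> y) + d^2 * (x \<bullet> x)"
      by (simp add: inner_diff_left inner_diff_right inner_commute[of y x] power2_eq_square right_diff_distrib)
    finally show ?thesis by (simp add: power2_norm_eq_inner)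
  qed
  also have "\<dots> \<le> norm y ^ 2 - 2 * d * (\<gamma> * norm x ^ 2) + d^2 * norm x ^ 2"
    using xy d0 by (simp add: mult_left_mono)
  also have "\<dots> = norm y ^ 2 + d * (d - 2 * \<gamma>) * norm x ^ 2"
    by (simp add: algebra_simps power2_eq_square)
  also have "\<dots> \<le> norm y ^ 2"
    using d0 by (simp add: mult_nonneg_nonpos mult_nonpos_nonneg)
  finally have n1: "norm (y - d *\<^sub>R x) \<le> norm y"
    using power2_le_imp_le by fastforce
  have n2: "norm (matrix_inv (\<eta> *\<^sub>R mat 1 - L1) *v x) \<le> norm x / \<eta>"
    using key(3)[OF assms(1) assms(3)] .
  have n3: "norm x / \<eta> \<le> norm y / (\<gamma> * \<eta>)"
    using nx assms(1) by (simp add: field_simps divide_right_mono)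
  have "((\<eta> *\<^sub>R mat 1 - L2 + \<beta>\<^sup>2 *\<^sub>R matrix_inv (\<eta> *\<^sub>R mat 1 - L1))
                    ** matrix_inv (\<gamma> *\<^sub>R mat 1 - L2)) *v y
       = (y - d *\<^sub>R x) + \<beta>\<^sup>2 *\<^sub>R (matrix_inv (\<eta> *\<^sub>R mat 1 - L1) *v x)"
  proof -
    have "((\<eta> *\<^sub>R mat 1 - L2 + \<beta>\<^sup>2 *\<^sub>R matrix_inv (\<eta> *\<^sub>R mat 1 - L1))
                    ** matrix_inv (\<gamma> *\<^sub>R mat 1 - L2)) *v y
      = (\<eta> *\<^sub>R mat 1 - L2 + \<beta>\<^sup>2 *\<^sub>R matrix_inv (\<eta> *\<^sub>R mat 1 - L1)) *v x"
      unfolding x_def by (rule matrix_vector_mul_assoc[symmetric])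
    also have "\<dots> = (\<eta> *\<^sub>R mat 1 - L2) *v x + (\<beta>\<^sup>2 *\<^sub>R matrix_inv (\<eta> *\<^sub>R mat 1 - L1)) *v x"
      by (rule matrix_vector_mult_add_rdistrib)
    also have "(\<beta>\<^sup>2 *\<^sub>R matrix_inv (\<eta> *\<^sub>R mat 1 - L1)) *v x = \<beta>\<^sup>2 *\<^sub>R (matrix_inv (\<eta> *\<^sub>R mat 1 - L1) *v x)"
      by (rule scaleR_matrix_vector_assoc[symmetric])
    finally show ?thesis unfolding Ax .
  qed
  also have "norm \<dots> \<le> norm y + \<beta>\<^sup>2 * (norm y / (\<gamma> * \<eta>))"
  proof -
    have "norm (\<beta>\<^sup>2 *\<^sub>R (matrix_inv (\<eta> *\<^sub>R mat 1 - L1) *v x)) \<le> \<beta>\<^sup>2 * (norm y / (\<gamma> * \<eta>))"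
      using mult_left_mono[OF order_trans[OF n2 n3], of "\<beta>\<^sup>2"] by simp
    thus ?thesis using n1 norm_triangle_ineq[of "y - d *\<^sub>R x" "\<beta>\<^sup>2 *\<^sub>R (matrix_inv (\<eta> *\<^sub>R mat 1 - L1) *v x)"] by linarith
  qed
  also have "\<dots> = (1 + \<beta>\<^sup>2 / (\<gamma> * \<eta>)) * norm y"
    by (simp add: distrib_right)
  finally show "norm (((\<eta> *\<^sub>R mat 1 - L2 + \<beta>\<^sup>2 *\<^sub>R matrix_inv (\<eta> *\<^sub>R mat 1 - L1))
                    ** matrix_inv (\<gamma> *\<^sub>R mat 1 - L2)) *v y) \<le> (1 + \<beta>\<^sup>2 / (\<gamma> * \<eta>)) * norm y" .
qed

end
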